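(* Consider the job set $J$ described in the context, with $p_\ell$ sufficiently large. Let $\sigma=(M_1,M_2)$ be a schedule of $J$ with $\omega_1(\sigma)=0$ and $\ell\in M_1$. Then $\sigma$ can be improved (its makespan strictly decreased) by the 3-swap that interchanges $a_1$ with $b_1,c_1$, making $\omega_1=1$.
   Context: Two identical machines; a schedule $\sigma=(M_1,M_2)$ partitions the jobs into sets processed on machines 1 and 2, with loads $L_i=\sum_{j\in M_i}p_j$ and makespan $\max_iL_i$. Fix $n\ge1$ and the job set $J=\{a_i,b_i,c_i:1\le i\le n\}\cup\{\ell\}$ with $p_{a_i}=2^{n+i+1}+2^{i-1}$, $p_{b_i}=2^{n+i}$, $p_{c_i}=2^{n+i-1}+2^{i-1}$, and $p_\ell$ a sufficiently large number. For each $i$ define $\omega_i(\sigma)=0$ if $a_i\in M_1$ and $b_i,c_i\in M_2$; $\omega_i(\sigma)=1$ if $a_i\in M_2$ and $b_i,c_i\in M_1$; and $\omega_i(\sigma)=-1$ otherwise. A 3-swap interchanges the machine assignments of exactly three jobs (some on each machine); it improves $\sigma$ if the makespan strictly decreases. *)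

theory Defs
  imports Main
begin

datatype job = A nat | B nat | C nat | Ell

definition jobs :: "nat \<Rightarrow> job set" where
  "jobs n = {A i | i. 1 \<le> i \<and> i \<le> n} \<union> {B i | i. 1 \<le> i \<and> i \<le> n}
            \<union> {C i | i. 1 \<le> i \<and> i \<le> n} \<union> {Ell}"

fun ptime :: "nat \<Rightarrow> nat \<Rightarrow> job \<Rightarrow> nat" where
  "ptime n pl (A i) = 2 ^ (n + i + 1) + 2 ^ (i - 1)"
| "ptime n pl (B i) = 2 ^ (n + i)"
| "ptime n pl (C i) = 2 ^ (n + i - 1) + 2 ^ (i - 1)"
| "ptime n pl Ell = pl"

definition is_schedule :: "nat \<Rightarrow> job set \<Rightarrow> job set \<Rightarrow> bool" where
  "is_schedule n M1 M2 \<longleftrightarrow> M1 \<union> M2 = jobs n \<and> M1 \<inter> M2 = {}"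

definition load :: "nat \<Rightarrow> nat \<Rightarrow> job set \<Rightarrow> nat" where
  "load n pl M = (\<Sum>j\<in>M. ptime n pl j)"

definition makespan :: "nat \<Rightarrow> nat \<Rightarrow> job set \<Rightarrow> job set \<Rightarrow> nat" where
  "makespan n pl M1 M2 = max (load n pl M1) (load n pl M2)"

definition omega :: "nat \<Rightarrow> job set \<Rightarrow> job set \<Rightarrow> int" where
  "omega i M1 M2 =
     (if A i \<in> M1 \<and> B i \<in> M2 \<and> C i \<in> M2 then 0
      else if A i \<in> M2 \<and> B i \<in> M1 \<and> C i \<in> M1 then 1
      else -1)"

definition swap :: "job set \<Rightarrow> job set \<Rightarrow> job set \<Rightarrow> job set \<times> job set" where
  "swap S M1 M2 = ((M1 - S) \<union> (M2 \<inter> S), (M2 - S) \<union> (M1 \<inter> S))"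

definition is_3swap :: "job set \<Rightarrow> job set \<Rightarrow> job set \<Rightarrow> bool" where
  "is_3swap S M1 M2 \<longleftrightarrow> card S = 3 \<and> S \<subseteq> M1 \<union> M2 \<and> S \<inter> M1 \<noteq> {} \<and> S \<inter> M2 \<noteq> {}"

definition improves :: "nat \<Rightarrow> nat \<Rightarrow> job set \<Rightarrow> job set \<Rightarrow> job set \<Rightarrow> bool" where
  "improves n pl S M1 M2 \<longleftrightarrow> is_3swap S M1 M2 \<and>
     makespan n pl (fst (swap S M1 M2)) (snd (swap S M1 M2)) < makespan n pl M1 M2"

end

theory Submission
  imports Defs
begin

lemma fin_jobs: "finite (jobs n)"
proof -
  have "jobs n \<subseteq> A ` {1..n} \<union> B ` {1..n} \<union> C ` {1..n} \<union> {Ell}"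
    unfolding jobs_def by auto
  thus ?thesis by (rule finite_subset) auto
qed

theorem lemma7:
  fixes n :: nat
  assumes "n \<ge> 1"
  shows "\<exists>P0. \<forall>pl \<ge> P0. \<forall>M1 M2.
           is_schedule n M1 M2 \<and> omega 1 M1 M2 = 0 \<and> Ell \<in> M1 \<longrightarrow>
             improves n pl {A 1, B 1, C 1} M1 M2 \<and>
             omega 1 (fst (swap {A 1, B 1, C 1} M1 M2)) (snd (swap {A 1, B 1, C 1} M1 M2)) = 1"
proof (intro exI allI impI)
  fix pl M1 M2
  let ?R = "jobs n - {Ell}"
  let ?S = "{A 1, B 1, C 1}"
  assume pl: "pl \<ge> (\<Sum>j\<in>?R. ptime n 0 j) + 2 ^ n"
  assume h: "is_schedule n M1 M2 \<and> omega 1 M1 M2 = 0 \<and> Ell \<in> M1"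
  have un: "M1 \<union> M2 = jobs n" and dj: "M1 \<inter> M2 = {}" using h by (auto simp: is_schedule_def)
  have a: "A 1 \<in> M1" and b: "B 1 \<in> M2" and c: "C 1 \<in> M2" and e: "Ell \<in> M1"
    using h by (auto simp: omega_def split: if_splits)
  have f1: "finite M1" and f2: "finite M2" using un fin_jobs by (metis finite_Un)+
  have b1: "B 1 \<notin> M1" "C 1 \<notin> M1" "A 1 \<notin> M2" using a b c dj by auto
  have sw1: "fst (swap ?S M1 M2) = insert (B 1) (insert (C 1) (M1 - {A 1}))"
    using a b c b1 by (auto simp: swap_def)
  have sw2: "snd (swap ?S M1 M2) = insert (A 1) (M2 - {B 1, C 1})"
    using a b c b1 by (auto simp: swap_def)
  have pa: "ptime n pl (A 1) = 2^(n+2) + 1" by simp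
  have pb: "ptime n pl (B 1) = 2^(n+1)" by simp
  have pc: "ptime n pl (C 1) = 2^n + 1" by simp
  have L1: "load n pl M1 = load n pl (M1 - {A 1}) + (2^(n+2) + 1)"
    unfolding load_def using f1 a by (simp add: sum.remove)
  have L1': "load n pl (fst (swap ?S M1 M2)) = load n pl (M1 - {A 1}) + (2^(n+1) + (2^n + 1))"
    unfolding sw1 load_def using f1 b1 by simp
  have L2: "load n pl M2 = load n pl (M2 - {B 1, C 1}) + (2^(n+1) + (2^n + 1))"
  proof -
    have "load n pl M2 = load n pl (M2 - {B 1}) + 2^(n+1)"
      unfolding load_def using f2 b by (simp add: sum.remove)
    moreover have "load n pl (M2 - {B 1}) = load n pl (M2 - {B 1} - {C 1}) + (2^n+1)"
      unfolding load_def using f2 c by (subst sum.remove[of _ "C 1"]) auto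
    moreover have "M2 - {B 1} - {C 1} = M2 - {B 1, C 1}" by auto
    ultimately show ?thesis by simp
  qed
  have L2': "load n pl (snd (swap ?S M1 M2)) = load n pl (M2 - {B 1, C 1}) + (2^(n+2) + 1)"
    unfolding sw2 load_def using f2 b1 by simp
  have M2R: "M2 \<subseteq> ?R" using un dj e by auto
  have "load n pl M2 = (\<Sum>j\<in>M2. ptime n 0 j)"
    unfolding load_def using M2R by (intro sum.cong) (auto, case_tac x, auto)
  also have "\<dots> \<le> (\<Sum>j\<in>?R. ptime n 0 j)"
    using M2R fin_jobs by (intro sum_mono2) auto
  finally have L2le: "load n pl M2 \<le> (\<Sum>j\<in>?R. ptime n 0 j)" .
  have "load n pl (M1 - {A 1}) \<ge> pl"
  proof -
    have "Ell \<in> M1 - {A 1}" using e by simp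
    hence "ptime n pl Ell \<le> (\<Sum>j\<in>M1 - {A 1}. ptime n pl j)"
      using f1 by (intro member_le_sum) auto
    thus ?thesis by (simp add: load_def)
  qed
  have p: "(2::nat)^(n+2) = 4 * 2^n" "(2::nat)^(n+1) = 2 * 2^n" by simp_all
  have imp: "makespan n pl (fst (swap ?S M1 M2)) (snd (swap ?S M1 M2)) < makespan n pl M1 M2"
    unfolding makespan_def using L1 L1' L2 L2' L2le pl \<open>load n pl (M1 - {A 1}) \<ge> pl\<close> p by simp
  have "card ?S = 3" by simp
  hence "is_3swap ?S M1 M2" unfolding is_3swap_def using a b c by auto
  moreover have "omega 1 (fst (swap ?S M1 M2)) (snd (swap ?S M1 M2)) = 1"
    unfolding sw1 sw2 omega_def by auto
  ultimately show "improves n pl ?S M1 M2 \<and>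
     omega 1 (fst (swap ?S M1 M2)) (snd (swap ?S M1 M2)) = 1"
    using imp by (simp add: improves_def)
qed

end
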